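(* Let $\{Q_j\}_{j=1}^{d^2}$ be an NQPR in dimension $d$ and let $U$ be a unitary on $\mathbb{C}^d$. Then all entries of the matrix $U^Q_{jk}=\operatorname{tr}(Q_jUQ_kU^\dagger)/d$ are nonnegative if and only if $U$ belongs to the symmetry group of $\{Q_j\}$.
   Context: An NQPR in dimension $d$ is a family $\{Q_j\}_{j=1}^{d^2}$ of Hermitian operators on $\mathbb{C}^d$ with $\operatorname{tr}(Q_j)=1$ and $\operatorname{tr}(Q_jQ_k)=d\,\delta_{jk}$. Its symmetry group is the group of all unitaries $U$ on $\mathbb{C}^d$ such that $\{UQ_jU^\dagger\}_j=\{Q_j\}_j$ as sets. *)

theory Defs
  imports "Jordan_Normal_Form.Schur_Decomposition"
begin

definition mtrace :: "complex mat \<Rightarrow> complex" where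
  "mtrace A = (\<Sum>i<dim_row A. A $$ (i, i))"

definition hermitian_mat :: "complex mat \<Rightarrow> bool" where
  "hermitian_mat A \<longleftrightarrow> A \<in> carrier_mat (dim_row A) (dim_row A) \<and> mat_adjoint A = A"

definition unitary_mat :: "nat \<Rightarrow> complex mat \<Rightarrow> bool" where
  "unitary_mat d U \<longleftrightarrow> U \<in> carrier_mat d d \<and> U * mat_adjoint U = 1\<^sub>m d \<and> mat_adjoint U * U = 1\<^sub>m d"

text \<open>An NQPR in dimension d, indexed by j = 0, ..., d^2 - 1.\<close>
definition NQPR :: "nat \<Rightarrow> (nat \<Rightarrow> complex mat) \<Rightarrow> bool" where
  "NQPR d Q \<longleftrightarrow>
     (\<forall>j<d^2. Q j \<in> carrier_mat d d \<and> hermitian_mat (Q j) \<and> mtrace (Q j) = 1) \<and>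
     (\<forall>j<d^2. \<forall>k<d^2. mtrace (Q j * Q k) = (if j = k then of_nat d else 0))"

definition symmetry_group :: "nat \<Rightarrow> (nat \<Rightarrow> complex mat) \<Rightarrow> complex mat set" where
  "symmetry_group d Q = {U. unitary_mat d U \<and>
     (\<lambda>j. U * Q j * mat_adjoint U) ` {..<d^2} = Q ` {..<d^2}}"

end

theory Submission
  imports Defs
begin


lemma adj_carrier: "A \<in> carrier_mat n m \<Longrightarrow> mat_adjoint A \<in> carrier_mat m n"
  unfolding mat_adjoint_def by auto

lemma adj_index: "A \<in> carrier_mat n m \<Longrightarrow> i < m \<Longrightarrow> j < n \<Longrightarrow> mat_adjoint A $$ (i,j) = cnj (A $$ (j,i))"
  unfolding mat_adjoint_def mat_of_rows_def by (auto simp: col_def)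

lemma mtrace_mult: "A \<in> carrier_mat n m \<Longrightarrow> B \<in> carrier_mat m n \<Longrightarrow>
  mtrace (A * B) = (\<Sum>i<n. \<Sum>k<m. A $$ (i,k) * B $$ (k,i))"
  unfolding mtrace_def by (auto simp: scalar_prod_def intro!: sum.cong atLeast0LessThan)

lemma mtrace_comm: "A \<in> carrier_mat n m \<Longrightarrow> B \<in> carrier_mat m n \<Longrightarrow>
  mtrace (A * B) = mtrace (B * A)"
  apply (simp add: mtrace_mult[of A n m B] mtrace_mult[of B m n A])
  apply (subst sum.swap) by (simp add: mult.commute)

lemma adj_mult: fixes A B :: "complex mat" shows "A \<in> carrier_mat n m \<Longrightarrow> B \<in> carrier_mat m p \<Longrightarrow>
  mat_adjoint (A * B) = mat_adjoint B * mat_adjoint A"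
proof -
  assume A: "A \<in> carrier_mat n m" and B: "B \<in> carrier_mat m p"
  have AB: "A * B \<in> carrier_mat n p" using A B by auto
  show ?thesis
  proof (rule eq_matI)
    fix i j assume i: "i < dim_row (mat_adjoint B * mat_adjoint A)" and j: "j < dim_col (mat_adjoint B * mat_adjoint A)"
    hence i: "i < p" and j: "j < n" using A B adj_carrier[OF A] adj_carrier[OF B] by auto
    have "mat_adjoint (A * B) $$ (i, j) = cnj ((A*B) $$ (j,i))" using adj_index[OF AB i j] .
    also have "\<dots> = cnj (\<Sum>k<m. A $$ (j,k) * B $$ (k,i))"
      using A B i j by (simp add: scalar_prod_def atLeast0LessThan)
    also have "\<dots> = (\<Sum>k<m. cnj (B $$ (k,i)) * cnj (A $$ (j,k)))"
      by (simp add: mult.commute)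
    also have "\<dots> = (mat_adjoint B * mat_adjoint A) $$ (i,j)"
      using A B i j adj_carrier[OF A] adj_carrier[OF B]
      by (simp add: scalar_prod_def atLeast0LessThan adj_index[OF A] adj_index[OF B])
    finally show "mat_adjoint (A * B) $$ (i, j) = (mat_adjoint B * mat_adjoint A) $$ (i,j)" .
  qed (use A B adj_carrier[OF A] adj_carrier[OF B] adj_carrier[OF AB] in auto)
qed

lemma herm_entry: "hermitian_mat A \<Longrightarrow> i < dim_row A \<Longrightarrow> j < dim_row A \<Longrightarrow> A $$ (i,j) = cnj (A $$ (j,i))"
  unfolding hermitian_mat_def by (metis adj_index complex_cnj_cnj)


lemma sum_divmod: "(\<Sum>p<m*d. f (p div d) (p mod d)) = (\<Sum>a<m. \<Sum>b<d. f a b)" for f :: "nat \<Rightarrow> nat \<Rightarrow> 'a::comm_monoid_add"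
proof (induction m)
  case 0 then show ?case by simp
next
  case (Suc m)
  have "{..<Suc m * d} = {..<m*d} \<union> (\<lambda>b. m*d+b) ` {..<d}"
  proof
    show "{..<Suc m * d} \<subseteq> {..<m*d} \<union> (\<lambda>b. m*d+b) ` {..<d}"
    proof
      fix x assume x: "x \<in> {..<Suc m * d}"
      show "x \<in> {..<m*d} \<union> (\<lambda>b. m*d+b) ` {..<d}"
      proof (cases "x < m*d")
        case False
        then have "x = m*d + (x - m*d)" "x - m*d < d" using x by auto
        then show ?thesis by (metis UnI2 imageI lessThan_iff)
      qed simp
    qed
  qed auto
  moreover have "(\<Sum>p\<in>(\<lambda>b. m*d+b) ` {..<d}. f (p div d) (p mod d)) = (\<Sum>b<d. f m b)"
    by (subst sum.reindex) (auto simp: inj_on_def)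
  moreover have "{..<m*d} \<inter> (\<lambda>b. m*d+b) ` {..<d} = {}" by auto
  ultimately show ?case using Suc by (simp add: sum.union_disjoint)
qed

lemma herm_trace: "hermitian_mat A \<Longrightarrow> B \<in> carrier_mat d d \<Longrightarrow> A \<in> carrier_mat d d \<Longrightarrow>
  mtrace (B * A) = (\<Sum>i<d. \<Sum>k<d. B $$ (i,k) * cnj (A $$ (i,k)))"
proof -
  assume H: "hermitian_mat A" and B: "B \<in> carrier_mat d d" and A: "A \<in> carrier_mat d d"
  have "mtrace (B * A) = (\<Sum>i<d. \<Sum>k<d. B $$ (i,k) * A $$ (k,i))" by (rule mtrace_mult[OF B A])
  also have "\<dots> = (\<Sum>i<d. \<Sum>k<d. B $$ (i,k) * cnj (A $$ (i,k)))"
  proof (intro sum.cong refl)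
    fix i k assume "i \<in> {..<d}" "k \<in> {..<d}"
    then have "A $$ (k,i) = cnj (A $$ (i,k))" using herm_entry[OF H, of k i] A by simp
    then show "B $$ (i,k) * A $$ (k,i) = B $$ (i,k) * cnj (A $$ (i,k))" by simp
  qed
  finally show ?thesis .
qed

lemma lt_sq: "a < d \<Longrightarrow> b < (d::nat) \<Longrightarrow> a * d + b < d * d"
proof -
  assume "a < d" "b < d"
  then have "a * d + b < (a+1) * d" by simp
  moreover have "(a+1)*d \<le> d * d" using \<open>a < d\<close> by (intro mult_le_mono1) simp
  ultimately show ?thesis by linarith
qed

lemma completeness:
  assumes N: "NQPR d Q" and ab: "a < d" "b < d" "a' < d" "b' < d"
  shows "(\<Sum>j<d^2. cnj (Q j $$ (a,b)) * Q j $$ (a',b')) = (if (a,b) = (a',b') then of_nat d else 0)"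
proof -
  have d0: "d > 0" using ab by auto
  define n where "n = d^2"
  have n: "n = d * d" unfolding n_def by (simp add: power2_eq_square)
  have Qc: "\<And>j. j < n \<Longrightarrow> Q j \<in> carrier_mat d d" "\<And>j. j < n \<Longrightarrow> hermitian_mat (Q j)"
    and Qo: "\<And>j k. j < n \<Longrightarrow> k < n \<Longrightarrow> mtrace (Q j * Q k) = (if j = k then of_nat d else 0)"
    using N unfolding NQPR_def n_def by auto
  define G where "G = mat n n (\<lambda>(j,p). Q j $$ (p div d, p mod d))"
  define H where "H = mat n n (\<lambda>(p,k). cnj (Q k $$ (p div d, p mod d)) / of_nat d)"
  have GH: "G * H = 1\<^sub>m n"
  proof (rule eq_matI)
    fix j k assume "j < dim_row (1\<^sub>m n)" "k < dim_col (1\<^sub>m n)"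
    hence j: "j < n" and k: "k < n" by auto
    have "(G * H) $$ (j,k) = (\<Sum>p<d*d. Q j $$ (p div d, p mod d) * (cnj (Q k $$ (p div d, p mod d)) / of_nat d))"
      using j k unfolding G_def H_def n by (simp add: scalar_prod_def atLeast0LessThan)
    also have "\<dots> = (\<Sum>a<d. \<Sum>b<d. Q j $$ (a, b) * (cnj (Q k $$ (a,b)) / of_nat d))"
      by (rule sum_divmod)
    also have "\<dots> = mtrace (Q j * Q k) / of_nat d"
      by (simp add: herm_trace[OF Qc(2)[OF k] Qc(1)[OF j] Qc(1)[OF k]] sum_divide_distrib)
    also have "\<dots> = 1\<^sub>m n $$ (j,k)" using Qo[OF j k] j k d0 by simp
    finally show "(G * H) $$ (j,k) = 1\<^sub>m n $$ (j,k)" .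
  qed (auto simp: G_def H_def)
  have HG: "H * G = 1\<^sub>m n"
    by (rule mat_mult_left_right_inverse[OF _ _ GH]) (auto simp: G_def H_def)
  define p where "p = a * d + b"
  define q where "q = a' * d + b'"
  have p: "p < n" "p div d = a" "p mod d = b" using ab unfolding p_def n
    by (auto simp: lt_sq)
  have q: "q < n" "q div d = a'" "q mod d = b'" using ab unfolding q_def n
    by (auto simp: lt_sq)
  have pq1: "(a,b) = (a',b') \<Longrightarrow> p = q" unfolding p_def q_def by simp
  have pq: "(p = q) = ((a,b) = (a',b'))" using p q pq1 by auto
  have "(H * G) $$ (p,q) = (\<Sum>j<n. cnj (Q j $$ (a,b)) / of_nat d * Q j $$ (a',b'))"
    using p q unfolding G_def H_def by (simp add: scalar_prod_def atLeast0LessThan)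
  also have "\<dots> = (\<Sum>j<n. cnj (Q j $$ (a,b)) * Q j $$ (a',b')) / of_nat d"
    by (simp add: sum_divide_distrib)
  finally have "(\<Sum>j<n. cnj (Q j $$ (a,b)) * Q j $$ (a',b')) / of_nat d = (if (a,b) = (a',b') then 1 else 0)"
    using HG p q pq by simp
  then show ?thesis using d0 unfolding n_def by (auto simp: field_simps split: if_splits)
qed


lemma sum_trace:
  assumes N: "NQPR d Q" and A: "A \<in> carrier_mat d d" and B: "B \<in> carrier_mat d d"
  shows "(\<Sum>j<d^2. mtrace (Q j * A) * mtrace (Q j * B)) = of_nat d * mtrace (A * B)"
proof -
  define S where "S = {..<d} \<times> {..<d}"
  have Qc: "\<And>j. j < d^2 \<Longrightarrow> Q j \<in> carrier_mat d d" "\<And>j. j < d^2 \<Longrightarrow> hermitian_mat (Q j)"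
    using N unfolding NQPR_def by auto
  have t1: "mtrace (Q j * A) = (\<Sum>x\<in>S. cnj (Q j $$ x) * A $$ x)" if j: "j < d^2" for j
  proof -
    have "mtrace (Q j * A) = (\<Sum>i<d. \<Sum>k<d. cnj (Q j $$ (k,i)) * A $$ (k,i))"
      unfolding mtrace_mult[OF Qc(1)[OF j] A]
    proof (intro sum.cong refl)
      fix i k assume "i \<in> {..<d}" "k \<in> {..<d}"
      then have "Q j $$ (i,k) = cnj (Q j $$ (k,i))" using herm_entry[OF Qc(2)[OF j], of i k] Qc(1)[OF j] by simp
      then show "Q j $$ (i,k) * A $$ (k,i) = cnj (Q j $$ (k,i)) * A $$ (k,i)" by simp
    qed
    also have "\<dots> = (\<Sum>k<d. \<Sum>i<d. cnj (Q j $$ (k,i)) * A $$ (k,i))" by (rule sum.swap)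
    also have "\<dots> = (\<Sum>x\<in>S. cnj (Q j $$ x) * A $$ x)" unfolding S_def
      by (simp add: sum.cartesian_product case_prod_beta')
    finally show ?thesis .
  qed
  have t2: "mtrace (Q j * B) = (\<Sum>y\<in>S. Q j $$ y * B $$ (snd y, fst y))" if j: "j < d^2" for j
    using mtrace_mult[OF Qc(1)[OF j] B] unfolding S_def by (simp add: sum.cartesian_product case_prod_beta')
  have comp: "(\<Sum>j<d^2. cnj (Q j $$ x) * Q j $$ y) = (if x = y then of_nat d else 0)" if "x \<in> S" "y \<in> S" for x y
    using completeness[OF N, of "fst x" "snd x" "fst y" "snd y"] that unfolding S_def by (auto split: if_splits)
  have "(\<Sum>j<d^2. mtrace (Q j * A) * mtrace (Q j * B))
      = (\<Sum>j<d^2. \<Sum>x\<in>S. \<Sum>y\<in>S. (cnj (Q j $$ x) * A $$ x) * (Q j $$ y * B $$ (snd y, fst y)))"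
    by (simp add: t1 t2 sum_product)
  also have "\<dots> = (\<Sum>x\<in>S. \<Sum>y\<in>S. \<Sum>j<d^2. (cnj (Q j $$ x) * A $$ x) * (Q j $$ y * B $$ (snd y, fst y)))"
    by (subst sum.swap) (simp add: sum.swap[of _ S "{..<d^2}"])
  also have "\<dots> = (\<Sum>x\<in>S. \<Sum>y\<in>S. A $$ x * B $$ (snd y, fst y) * (\<Sum>j<d^2. cnj (Q j $$ x) * Q j $$ y))"
    by (simp add: sum_distrib_left mult_ac)
  also have "\<dots> = (\<Sum>x\<in>S. \<Sum>y\<in>S. A $$ x * B $$ (snd y, fst y) * (if x = y then of_nat d else 0))"
    by (intro sum.cong refl) (simp add: comp)
  also have "\<dots> = (\<Sum>x\<in>S. A $$ x * B $$ (snd x, fst x) * of_nat d)"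
    unfolding S_def by (intro sum.cong refl) (simp add: if_distrib sum.delta cong: if_cong)
  also have "\<dots> = of_nat d * (\<Sum>k<d. \<Sum>i<d. A $$ (k,i) * B $$ (i,k))"
    unfolding S_def by (simp add: sum.cartesian_product case_prod_beta' sum_distrib_left sum_distrib_right mult_ac)
  also have "\<dots> = of_nat d * mtrace (A * B)" using mtrace_mult[OF A B] by simp
  finally show ?thesis .
qed

lemma adj_adj: "A \<in> carrier_mat n m \<Longrightarrow> mat_adjoint (mat_adjoint A) = A" for A :: "complex mat"
proof -
  assume A: "A \<in> carrier_mat n m"
  have B: "mat_adjoint A \<in> carrier_mat m n" by (rule adj_carrier[OF A])
  have C: "mat_adjoint (mat_adjoint A) \<in> carrier_mat n m" by (rule adj_carrier[OF B])
  show ?thesis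
    by (rule eq_matI) (use A B C in \<open>auto simp: adj_index[OF A] adj_index[OF B]\<close>)
qed

lemma real_one:
  fixes r :: "nat \<Rightarrow> real"
  assumes nn: "\<And>j. j < n \<Longrightarrow> r j \<ge> 0" and s1: "(\<Sum>j<n. r j) = 1" and s2: "(\<Sum>j<n. r j ^ 2) = 1"
  shows "\<exists>j<n. r j = 1"
proof -
  have le1: "r j \<le> 1" if "j < n" for j
  proof -
    have "r j ^ 2 \<le> (\<Sum>j<n. r j ^ 2)" by (rule member_le_sum) (use that in auto)
    then have "r j ^ 2 \<le> 1" using s2 by simp
    then show ?thesis using nn[OF that] by (simp add: power_le_one_iff)
  qed
  have "(\<Sum>j<n. r j - r j ^ 2) = 0" using s1 s2 by (simp add: sum_subtractf)
  moreover have "\<forall>j\<in>{..<n}. r j - r j ^ 2 \<ge> 0"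
  proof
    fix j assume "j \<in> {..<n}"
    then have "0 \<le> r j" "r j \<le> 1" using nn le1 by auto
    then have "r j * r j \<le> r j * 1" by (intro mult_left_mono) auto
    then show "r j - r j ^ 2 \<ge> 0" by (simp add: power2_eq_square)
  qed
  ultimately have z: "\<forall>j\<in>{..<n}. r j - r j ^ 2 = 0"
    using sum_nonneg_eq_0_iff[of "{..<n}" "\<lambda>j. r j - r j ^ 2"] by auto
  show ?thesis
  proof (rule ccontr)
    assume "\<not> ?thesis"
    then have "\<forall>j\<in>{..<n}. r j = 0" using z by (auto simp: power2_eq_square)
    then have "(\<Sum>j<n. r j) = 0" by simp
    then show False using s1 by simp
  qed
qed

lemma eq_from_trace:
  assumes A: "A \<in> carrier_mat d d" and B: "B \<in> carrier_mat d d"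
    and hA: "hermitian_mat A" and hB: "hermitian_mat B"
    and t: "mtrace (A * A) - mtrace (A * B) - mtrace (B * A) + mtrace (B * B) = 0"
  shows "A = B"
proof -
  define w where "w i k = A $$ (i,k) - B $$ (i,k)" for i k
  have "(\<Sum>i<d. \<Sum>k<d. w i k * cnj (w i k)) =
     mtrace (A * A) - mtrace (A * B) - mtrace (B * A) + mtrace (B * B)"
    unfolding herm_trace[OF hA A A] herm_trace[OF hB A B] herm_trace[OF hA B A] herm_trace[OF hB B B] w_def
    by (simp add: algebra_simps sum_subtractf sum.distrib)
  then have "(\<Sum>i<d. \<Sum>k<d. w i k * cnj (w i k)) = 0" using t by simp
  moreover have "w i k * cnj (w i k) = of_real ((cmod (w i k))^2)" for i k
    by (metis complex_norm_square of_real_power)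
  ultimately have "of_real (\<Sum>i<d. \<Sum>k<d. (cmod (w i k))^2) = (0::complex)" by simp
  then have s0: "(\<Sum>i<d. \<Sum>k<d. (cmod (w i k))^2) = 0" by (simp only: of_real_eq_0_iff)
  have "\<forall>i\<in>{..<d}. (\<Sum>k<d. (cmod (w i k))^2) = 0"
    using sum_nonneg_eq_0_iff[of "{..<d}" "\<lambda>i. \<Sum>k<d. (cmod (w i k))^2"] s0 by (simp add: sum_nonneg)
  then have "\<forall>i<d. \<forall>k<d. (cmod (w i k))^2 = 0"
  proof (intro allI impI)
    fix i k assume "\<forall>i\<in>{..<d}. (\<Sum>k<d. (cmod (w i k))^2) = 0" "i < d" "k < d"
    then show "(cmod (w i k))^2 = 0"
      using sum_nonneg_eq_0_iff[of "{..<d}" "\<lambda>k. (cmod (w i k))^2"] by auto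
  qed
  then have "\<forall>i<d. \<forall>k<d. A $$ (i,k) = B $$ (i,k)" unfolding w_def by auto
  then show ?thesis using A B by (intro eq_matI) auto
qed




theorem theorem5:
  fixes d :: nat and Q :: "nat \<Rightarrow> complex mat" and U :: "complex mat"
  assumes "NQPR d Q" and "unitary_mat d U"
  shows "(\<forall>j<d^2. \<forall>k<d^2. (0::complex) \<le> mtrace (Q j * U * Q k * mat_adjoint U) / of_nat d)
         \<longleftrightarrow> U \<in> symmetry_group d Q"
proof -
  note N = assms(1)
  define n where "n = d^2"
  have Qc: "\<And>j. j < n \<Longrightarrow> Q j \<in> carrier_mat d d" and Qh: "\<And>j. j < n \<Longrightarrow> hermitian_mat (Q j)"
    and Qt: "\<And>j. j < n \<Longrightarrow> mtrace (Q j) = 1"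
    and Qo: "\<And>j k. j < n \<Longrightarrow> k < n \<Longrightarrow> mtrace (Q j * Q k) = (if j = k then of_nat d else 0)"
    using N unfolding NQPR_def n_def by auto
  have Uc: "U \<in> carrier_mat d d" and UUa: "U * mat_adjoint U = 1\<^sub>m d" and UaU: "mat_adjoint U * U = 1\<^sub>m d"
    using assms(2) unfolding unitary_mat_def by auto
  have Ua: "mat_adjoint U \<in> carrier_mat d d" using adj_carrier[OF Uc] .
  define X where "X k = U * Q k * mat_adjoint U" for k
  have Xc: "X k \<in> carrier_mat d d" if "k < n" for k using Qc[OF that] Uc Ua unfolding X_def by auto
  have Xh: "hermitian_mat (X k)" if k: "k < n" for k
  proof -
    have "mat_adjoint (X k) = mat_adjoint (mat_adjoint U) * mat_adjoint (U * Q k)"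
      unfolding X_def by (rule adj_mult[of _ d d _ d]) (use Uc Qc[OF k] Ua in auto)
    also have "\<dots> = U * (mat_adjoint (Q k) * mat_adjoint U)"
      using adj_adj[OF Uc] adj_mult[OF Uc Qc[OF k]] by simp
    also have "\<dots> = X k" using Qh[OF k] Uc Ua Qc[OF k] unfolding hermitian_mat_def X_def by simp
    finally show ?thesis using Xc[OF k] unfolding hermitian_mat_def by simp
  qed
  have Xtr: "mtrace (Q j * U * Q k * mat_adjoint U) = mtrace (Q j * X k)" if "j < n" "k < n" for j k
  proof -
    have UQ: "U * Q k \<in> carrier_mat d d" using Qc[OF that(2)] Uc by auto
    show ?thesis unfolding X_def
      by (simp only: assoc_mult_mat[OF Qc[OF that(1)] Uc Qc[OF that(2)]]
          assoc_mult_mat[OF Qc[OF that(1)] UQ Ua])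
  qed
  have cancel: "mat_adjoint U * (U * M) = M" if "M \<in> carrier_mat d m" for M m
  proof -
    have "mat_adjoint U * (U * M) = (mat_adjoint U * U) * M" using that Uc Ua by simp
    then show ?thesis using UaU that by simp
  qed
  have XX: "mtrace (X k * X l) = mtrace (Q k * Q l)" if k: "k < n" and l: "l < n" for k l
  proof -
    note B = Qc[OF k] and D = Qc[OF l]
    have AB: "U * Q k \<in> carrier_mat d d" and ABC: "U * Q k * mat_adjoint U \<in> carrier_mat d d"
      and AD: "U * Q l \<in> carrier_mat d d" and BD: "Q k * Q l \<in> carrier_mat d d"
      and BDC: "Q k * Q l * mat_adjoint U \<in> carrier_mat d d"
      using B D Uc Ua by auto
    have "X k * X l = (U * Q k * mat_adjoint U) * ((U * Q l) * mat_adjoint U)" unfolding X_def ..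
    also have "\<dots> = ((U * Q k * mat_adjoint U) * (U * Q l)) * mat_adjoint U"
      by (rule assoc_mult_mat[OF ABC AD Ua, symmetric])
    also have "(U * Q k * mat_adjoint U) * (U * Q l) = (U * Q k) * (mat_adjoint U * (U * Q l))"
      by (rule assoc_mult_mat[OF AB Ua AD])
    also have "mat_adjoint U * (U * Q l) = Q l" by (rule cancel[OF D])
    also have "U * Q k * Q l = U * (Q k * Q l)" by (rule assoc_mult_mat[OF Uc B D])
    also have "U * (Q k * Q l) * mat_adjoint U = U * (Q k * Q l * mat_adjoint U)"
      by (rule assoc_mult_mat[OF Uc BD Ua])
    finally have "mtrace (X k * X l) = mtrace ((Q k * Q l * mat_adjoint U) * U)"
      using mtrace_comm[OF Uc BDC] by simp
    also have "(Q k * Q l * mat_adjoint U) * U = (Q k * Q l) * (mat_adjoint U * U)"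
      by (rule assoc_mult_mat[OF BD Ua Uc])
    also have "\<dots> = Q k * Q l" using UaU right_mult_one_mat[OF BD] by simp
    finally show ?thesis .
  qed
  have Xt: "mtrace (X k) = 1" if k: "k < n" for k
  proof -
    have "mtrace (X k) = mtrace (U * (Q k * mat_adjoint U))" unfolding X_def using Qc[OF k] Uc Ua by simp
    also have "\<dots> = mtrace ((Q k * mat_adjoint U) * U)"
      by (rule mtrace_comm) (use Qc[OF k] Uc Ua in auto)
    also have "\<dots> = mtrace (Q k)" using Qc[OF k] Uc Ua UaU by simp
    finally show ?thesis using Qt[OF k] by simp
  qed
  show ?thesis
  proof
    assume pos: "\<forall>j<d^2. \<forall>k<d^2. (0::complex) \<le> mtrace (Q j * U * Q k * mat_adjoint U) / of_nat d"
    show "U \<in> symmetry_group d Q"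
    proof (cases "d = 0")
      case True then show ?thesis using assms(2) unfolding symmetry_group_def by simp
    next
      case False
      then have d0: "d > 0" by simp
      have ex: "\<exists>j<n. X k = Q j" if k: "k < n" for k
      proof -
        define c where "c j = mtrace (Q j * X k) / of_nat d" for j
        have cpos: "0 \<le> c j" if "j < n" for j
        proof -
          have "0 \<le> mtrace (Q j * U * Q k * mat_adjoint U) / of_nat d"
            using pos that k unfolding n_def by blast
          then show ?thesis unfolding c_def using Xtr[OF that k] by simp
        qed
        have "(\<Sum>j<n. mtrace (Q j * X k) * mtrace (Q j * 1\<^sub>m d)) = of_nat d * mtrace (X k * 1\<^sub>m d)"
          using sum_trace[OF N Xc[OF k], of "1\<^sub>m d"] unfolding n_def by simp
        moreover have "(\<Sum>j<n. mtrace (Q j * X k) * mtrace (Q j * 1\<^sub>m d)) = (\<Sum>j<n. mtrace (Q j * X k))"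
        proof (intro sum.cong refl)
          fix j assume "j \<in> {..<n}"
          then have jn: "j < n" by simp
          have "Q j * 1\<^sub>m d = Q j" "mtrace (Q j) = 1"
            using right_mult_one_mat[OF Qc[OF jn]] Qt[OF jn] by auto
          then show "mtrace (Q j * X k) * mtrace (Q j * 1\<^sub>m d) = mtrace (Q j * X k)" by simp
        qed
        ultimately have "(\<Sum>j<n. mtrace (Q j * X k)) = of_nat d" using Xc[OF k] Xt[OF k] by simp
        then have s1: "(\<Sum>j<n. c j) = 1" unfolding c_def using d0 by (simp add: sum_divide_distrib[symmetric])
        have "(\<Sum>j<n. mtrace (Q j * X k) * mtrace (Q j * X k)) = of_nat d * mtrace (X k * X k)"
          using sum_trace[OF N Xc[OF k] Xc[OF k]] unfolding n_def by simp
        also have "\<dots> = of_nat d * of_nat d" using XX[OF k k] Qo[OF k k] by simp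
        finally have s2: "(\<Sum>j<n. c j ^ 2) = 1" unfolding c_def using d0
          by (simp add: power2_eq_square sum_divide_distrib[symmetric])
        define r where "r j = Re (c j)" for j
        have cr: "c j = of_real (r j)" if "j < n" for j
          using cpos[OF that] unfolding r_def by (simp add: less_eq_complex_def complex_eq_iff)
        have rnn: "r j \<ge> 0" if "j < n" for j using cpos[OF that] unfolding r_def by (simp add: less_eq_complex_def)
        have "of_real (\<Sum>j<n. r j) = (1::complex)" using s1 cr by simp
        then have r1: "(\<Sum>j<n. r j) = 1" by (simp only: of_real_eq_1_iff)
        have "of_real (\<Sum>j<n. r j ^ 2) = (1::complex)" using s2 cr by simp
        then have r2: "(\<Sum>j<n. r j ^ 2) = 1" by (simp only: of_real_eq_1_iff)
        obtain j where j: "j < n" "r j = 1" using real_one[OF rnn r1 r2] by blast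
        have tj: "mtrace (Q j * X k) = of_nat d" using cr[OF j(1)] j(2) d0 unfolding c_def by (simp add: field_simps)
        have tj': "mtrace (X k * Q j) = of_nat d"
          using tj mtrace_comm[OF Qc[OF j(1)] Xc[OF k]] by simp
        have "X k = Q j"
          by (rule eq_from_trace[OF Xc[OF k] Qc[OF j(1)] Xh[OF k] Qh[OF j(1)]])
            (simp add: tj tj' XX[OF k k] Qo[OF k k] Qo[OF j(1) j(1)])
        then show ?thesis using j by blast
      qed
      have inj: "inj_on X {..<n}"
      proof
        fix k l assume k: "k \<in> {..<n}" and l: "l \<in> {..<n}" and e: "X k = X l"
        have "mtrace (X k * X l) = of_nat d" using e XX[of l l] Qo[of l l] l by simp
        then show "k = l" using XX[of k l] Qo[of k l] k l d0 by (auto split: if_splits)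
      qed
      have sub: "X ` {..<n} \<subseteq> Q ` {..<n}" using ex by blast
      have "card (Q ` {..<n}) \<le> card (X ` {..<n})"
        using card_image_le[of "{..<n}" Q] card_image[OF inj] by simp
      then have "X ` {..<n} = Q ` {..<n}" by (intro card_seteq[OF _ sub]) auto
      then show ?thesis using assms(2) unfolding symmetry_group_def X_def n_def by simp
    qed
  next
    assume "U \<in> symmetry_group d Q"
    then have im: "X ` {..<n} = Q ` {..<n}" unfolding symmetry_group_def X_def n_def by simp
    show "\<forall>j<d^2. \<forall>k<d^2. (0::complex) \<le> mtrace (Q j * U * Q k * mat_adjoint U) / of_nat d"
    proof (intro allI impI)
      fix j k assume j: "j < d^2" and k: "k < d^2"
      then have j: "j < n" and k: "k < n" unfolding n_def by auto
      obtain i where i: "i < n" "X k = Q i" using im k by (metis imageI image_iff lessThan_iff)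
      show "(0::complex) \<le> mtrace (Q j * U * Q k * mat_adjoint U) / of_nat d"
        using Xtr[OF j k] i Qo[OF j i(1)] by (simp add: less_eq_complex_def)
    qed
  qed
qed

end
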